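(* Let $V$ be a real vector space of dimension $2m$ with a positive definite symmetric bilinear form $d$ and a real-linear $J$ with $J^2=-1$ and $d(Ju,Jv)=d(u,v)$ for all $u,v$. Let $V_{\mathbb C}=V\otimes_{\mathbb R}\mathbb C$ with conjugation $w\mapsto\bar w$, and extend $d$ complex-bilinearly and real-linear operators complex-linearly to $V_{\mathbb C}$. Let $W\le V_{\mathbb C}$ be an admissible polarization, i.e. a complex subspace with $W\cap\overline W=\{0\}$, $W\oplus\overline W=V_{\mathbb C}$, and $d(w_1,w_2)=0$ for all $w_1,w_2\in W$; let $J_W\in\operatorname{End}_{\mathbb R}(V)$ be the (orthogonal, $J_W^2=-1$) operator with $W=\{\tfrac12(u-iJ_Wu):u\in V\}$, and let $W_J:=\{\tfrac12(u-iJu):u\in V\}$. Consider the complex-linear operator $B:=\tfrac12(1-J_WJ)$ on the Hilbert space $V_{\mathbb C}$ with inner product $\langle\langle w_1|w_2\rangle\rangle:=2d(\bar w_1,w_2)$. Then the adjoint of $B$ is $B^\dagger=\tfrac12(1-JJ_W)$, and $$\ker B=\ker B^\dagger=(W\cap\overline{W_J})\oplus(\overline W\cap W_J).$$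
   Context: For every admissible polarization $W$ (as defined in the claim) there is a unique real-linear $J_W$ on $V$ with $W=\{\tfrac12(u-iJ_Wu):u\in V\}$; it satisfies $J_W^2=-1$ and is orthogonal for $d$. *)

theory Defs
  imports "HOL-Analysis.Analysis"
begin

text \<open>Complexification V_C = V (x) C of a real vector space V is modelled as V \<times> V,
  the pair (a, b) standing for a + i b.\<close>

type_synonym 'v cplx = "'v \<times> 'v"

definition cscale :: "complex \<Rightarrow> 'v::real_vector cplx \<Rightarrow> 'v cplx" where
  "cscale z w = (Re z *\<^sub>R fst w - Im z *\<^sub>R snd w, Re z *\<^sub>R snd w + Im z *\<^sub>R fst w)"

definition cconj :: "'v::real_vector cplx \<Rightarrow> 'v cplx" where
  "cconj w = (fst w, - snd w)"

definition cconj_set :: "'v::real_vector cplx set \<Rightarrow> 'v cplx set" where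
  "cconj_set W = cconj ` W"

definition cext :: "('v::real_vector \<Rightarrow> 'v) \<Rightarrow> 'v cplx \<Rightarrow> 'v cplx" where
  "cext T w = (T (fst w), T (snd w))"

definition cform :: "('v::real_vector \<Rightarrow> 'v \<Rightarrow> real) \<Rightarrow> 'v cplx \<Rightarrow> 'v cplx \<Rightarrow> complex" where
  "cform d w1 w2 = Complex (d (fst w1) (fst w2) - d (snd w1) (snd w2))
                           (d (fst w1) (snd w2) + d (snd w1) (fst w2))"

definition hinner :: "('v::real_vector \<Rightarrow> 'v \<Rightarrow> real) \<Rightarrow> 'v cplx \<Rightarrow> 'v cplx \<Rightarrow> complex" where
  "hinner d w1 w2 = 2 * cform d (cconj w1) w2"

definition complex_subspace :: "'v::real_vector cplx set \<Rightarrow> bool" where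
  "complex_subspace W \<longleftrightarrow> 0 \<in> W \<and> (\<forall>x\<in>W. \<forall>y\<in>W. x + y \<in> W) \<and> (\<forall>z. \<forall>x\<in>W. cscale z x \<in> W)"

definition admissible_polarization ::
  "('v::real_vector \<Rightarrow> 'v \<Rightarrow> real) \<Rightarrow> 'v cplx set \<Rightarrow> bool" where
  "admissible_polarization d W \<longleftrightarrow>
     complex_subspace W \<and> W \<inter> cconj_set W = {0} \<and>
     {x + y | x y. x \<in> W \<and> y \<in> cconj_set W} = UNIV \<and>
     (\<forall>w1\<in>W. \<forall>w2\<in>W. cform d w1 w2 = 0)"

definition polarization_of :: "('v::real_vector \<Rightarrow> 'v) \<Rightarrow> 'v cplx set" where
  "polarization_of K = {((1/2) *\<^sub>R u, - ((1/2) *\<^sub>R K u)) | u. True}"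

definition is_adjoint ::
  "('v::real_vector \<Rightarrow> 'v \<Rightarrow> real) \<Rightarrow> ('v cplx \<Rightarrow> 'v cplx) \<Rightarrow> ('v cplx \<Rightarrow> 'v cplx) \<Rightarrow> bool" where
  "is_adjoint d A Ad \<longleftrightarrow> (\<forall>x y. hinner d (A x) y = hinner d x (Ad y))"

definition ker :: "('v::real_vector cplx \<Rightarrow> 'v cplx) \<Rightarrow> 'v cplx set" where
  "ker A = {w. A w = 0}"

definition is_direct_sum :: "'v::real_vector cplx set \<Rightarrow> 'v cplx set \<Rightarrow> 'v cplx set \<Rightarrow> bool" where
  "is_direct_sum S A B \<longleftrightarrow> S = {x + y | x y. x \<in> A \<and> y \<in> B} \<and> A \<inter> B = {0}"

end

theory Submission
  imports Defs
begin

lemma cext_zero_iff: "cext T w = 0 \<longleftrightarrow> T (fst w) = 0 \<and> T (snd w) = 0"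
  by (simp add: cext_def prod_eq_iff)

theorem proposition2p8:
  fixes d :: "'v::euclidean_space \<Rightarrow> 'v \<Rightarrow> real"
    and J JW :: "'v \<Rightarrow> 'v"
    and W :: "'v cplx set"
    and m :: nat
  assumes dim: "DIM('v) = 2 * m"
    and d_bilin: "bilinear d"
    and d_sym: "\<forall>u v. d u v = d v u"
    and d_pos: "\<forall>u. u \<noteq> 0 \<longrightarrow> d u u > 0"
    and J_lin: "linear J"
    and J_sq: "\<forall>u. J (J u) = - u"
    and J_orth: "\<forall>u v. d (J u) (J v) = d u v"
    and W_adm: "admissible_polarization d W"
    and JW_lin: "linear JW"
    and JW_def: "W = polarization_of JW"
  shows "is_adjoint d (cext (\<lambda>u. (1/2) *\<^sub>R (u - JW (J u))))
                      (cext (\<lambda>u. (1/2) *\<^sub>R (u - J (JW u))))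
       \<and> ker (cext (\<lambda>u. (1/2) *\<^sub>R (u - JW (J u))))
           = ker (cext (\<lambda>u. (1/2) *\<^sub>R (u - J (JW u))))
       \<and> is_direct_sum (ker (cext (\<lambda>u. (1/2) *\<^sub>R (u - JW (J u)))))
           (W \<inter> cconj_set (polarization_of J))
           (cconj_set W \<inter> polarization_of J)"
proof -
  have Wmem: "w \<in> W \<longleftrightarrow> (\<exists>u. w = ((1/2) *\<^sub>R u, - ((1/2) *\<^sub>R JW u)))" for w
    unfolding JW_def polarization_of_def by auto
  have csub: "complex_subspace W" and iso: "\<forall>w1\<in>W. \<forall>w2\<in>W. cform d w1 w2 = 0"
    using W_adm unfolding admissible_polarization_def by auto
  have JWsq: "JW (JW u) = - u" for u
  proof -
    have "cscale \<i> ((1/2) *\<^sub>R u, - ((1/2) *\<^sub>R JW u)) \<in> W"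
      using csub Wmem unfolding complex_subspace_def by blast
    then obtain v where v: "((1/2) *\<^sub>R JW u, (1/2) *\<^sub>R u) = ((1/2) *\<^sub>R v, - ((1/2) *\<^sub>R JW v))"
      unfolding Wmem cscale_def by auto
    hence "v = JW u" by auto
    moreover from v have "(1/2) *\<^sub>R u = - ((1/2) *\<^sub>R JW v)" by auto
    hence "u = - JW v" by (metis scaleR_left_distrib scaleR_minus_right field_sum_of_halves scaleR_one)
    ultimately show ?thesis by simp
  qed
  have JWorth: "d (JW u) (JW v) = d u v" for u v
  proof -
    have "cform d ((1/2) *\<^sub>R u, - ((1/2) *\<^sub>R JW u)) ((1/2) *\<^sub>R v, - ((1/2) *\<^sub>R JW v)) = 0"
      using iso Wmem by blast
    hence "Re (cform d ((1/2) *\<^sub>R u, - ((1/2) *\<^sub>R JW u)) ((1/2) *\<^sub>R v, - ((1/2) *\<^sub>R JW v))) = 0"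
      by simp
    thus ?thesis
      by (simp add: cform_def bilinear_lmul[OF d_bilin] bilinear_rmul[OF d_bilin]
            bilinear_lneg[OF d_bilin] bilinear_rneg[OF d_bilin])
  qed
  have JWneg: "JW (- x) = - JW x" for x using JW_lin by (simp add: linear_neg)
  have Jneg: "J (- x) = - J x" for x using J_lin by (simp add: linear_neg)
  have dJW: "d (JW x) v = - d x (JW v)" for x v
  proof -
    have "d (JW x) v = d (JW (JW x)) (JW v)" by (simp add: JWorth)
    also have "\<dots> = - d x (JW v)" by (simp add: JWsq bilinear_lneg[OF d_bilin])
    finally show ?thesis .
  qed
  define b where "b = (\<lambda>u. (1/2) *\<^sub>R (u - JW (J u)))"
  define b' where "b' = (\<lambda>u. (1/2) *\<^sub>R (u - J (JW u)))"
  have adj_real: "d (b u) v = d u (b' v)" for u v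
  proof -
    have "d (JW (J u)) v = d u (J (JW v))"
      using dJW[of "J u" v] J_orth[rule_format, of "J u" "JW v"]
      by (simp add: J_sq bilinear_lneg[OF d_bilin])
    thus ?thesis unfolding b_def b'_def
      by (simp add: bilinear_lmul[OF d_bilin] bilinear_rmul[OF d_bilin]
            bilinear_lsub[OF d_bilin] bilinear_rsub[OF d_bilin])
  qed
  have P1: "is_adjoint d (cext b) (cext b')"
    unfolding is_adjoint_def hinner_def cform_def cconj_def cext_def
    by (simp add: adj_real bilinear_lneg[OF d_bilin])
  define S where "S = {u. JW u = - J u}"
  have bS: "b u = 0 \<longleftrightarrow> u \<in> S" for u
  proof -
    have "b u = 0 \<longleftrightarrow> JW (J u) = u" unfolding b_def by auto
    also have "\<dots> \<longleftrightarrow> JW u = - J u"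
    proof
      assume "JW (J u) = u"
      hence "JW (JW (J u)) = JW u" by simp
      thus "JW u = - J u" by (metis JWsq)
    next
      assume "JW u = - J u"
      hence "JW (JW u) = JW (- J u)" by simp
      hence "- u = - JW (J u)" by (simp add: JWsq JWneg)
      thus "JW (J u) = u" by simp
    qed
    finally show ?thesis unfolding S_def by simp
  qed
  have b'S: "b' u = 0 \<longleftrightarrow> u \<in> S" for u
  proof -
    have "b' u = 0 \<longleftrightarrow> J (JW u) = u" unfolding b'_def by auto
    also have "\<dots> \<longleftrightarrow> JW u = - J u"
    proof
      assume "J (JW u) = u"
      hence "J (J (JW u)) = J u" by simp
      thus "JW u = - J u" by (metis J_sq minus_minus)
    next
      assume "JW u = - J u"
      thus "J (JW u) = u" by (simp add: J_sq Jneg)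
    qed
    finally show ?thesis unfolding S_def by simp
  qed
  have kerS: "ker (cext b) = S \<times> S" unfolding ker_def
    by (auto simp: cext_zero_iff bS)
  have kerS': "ker (cext b') = S \<times> S" unfolding ker_def
    by (auto simp: cext_zero_iff b'S)
  have S_add: "x \<in> S \<Longrightarrow> y \<in> S \<Longrightarrow> x + y \<in> S" for x y
    unfolding S_def using J_lin JW_lin by (simp add: linear_add)
  have S_sub: "x \<in> S \<Longrightarrow> y \<in> S \<Longrightarrow> x - y \<in> S" for x y
    unfolding S_def using J_lin JW_lin by (simp add: linear_diff)
  have S_scale: "x \<in> S \<Longrightarrow> c *\<^sub>R x \<in> S" for x c
    unfolding S_def using J_lin JW_lin by (simp add: linear_scale)
  have S_J: "x \<in> S \<Longrightarrow> J x \<in> S" for x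
  proof -
    assume "x \<in> S"
    hence "JW x = - J x" by (simp add: S_def)
    hence "JW (J x) = x" using bS[of x] \<open>x \<in> S\<close> unfolding b_def by auto
    thus "J x \<in> S" unfolding S_def by (simp add: J_sq)
  qed
  have half: "(1/2) *\<^sub>R ((2::real) *\<^sub>R a) = a" for a :: 'v by simp
  have A: "W \<inter> cconj_set (polarization_of J) = {(a, J a) | a. a \<in> S}"
  proof (rule set_eqI, rule iffI)
    fix w assume "w \<in> W \<inter> cconj_set (polarization_of J)"
    hence w1: "w \<in> W" and w2: "w \<in> cconj_set (polarization_of J)" by auto
    from w1 obtain u where u: "w = ((1/2) *\<^sub>R u, - ((1/2) *\<^sub>R JW u))"
      unfolding Wmem by blast
    from w2 obtain v where v: "w = ((1/2) *\<^sub>R v, (1/2) *\<^sub>R J v)"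
      unfolding cconj_set_def polarization_of_def cconj_def by auto
    from u v have uv: "u = v" by auto
    with u v have "(1/2) *\<^sub>R JW u = - ((1/2) *\<^sub>R J u)" by auto
    hence "JW ((1/2) *\<^sub>R u) = - J ((1/2) *\<^sub>R u)"
      using J_lin JW_lin by (simp add: linear_scale)
    hence "(1/2) *\<^sub>R u \<in> S" by (simp add: S_def)
    moreover have "w = ((1/2) *\<^sub>R u, J ((1/2) *\<^sub>R u))"
      using v uv J_lin by (simp add: linear_scale)
    ultimately show "w \<in> {(a, J a) | a. a \<in> S}" by blast
  next
    fix w assume "w \<in> {(a, J a) | a. a \<in> S}"
    then obtain a where a: "a \<in> S" "w = (a, J a)" by blast
    have "w = ((1/2) *\<^sub>R (2 *\<^sub>R a), - ((1/2) *\<^sub>R JW (2 *\<^sub>R a)))"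
      using a JW_lin by (simp add: linear_scale S_def)
    hence "w \<in> W" using Wmem by blast
    moreover have "w = cconj ((1/2) *\<^sub>R (2 *\<^sub>R a), - ((1/2) *\<^sub>R J (2 *\<^sub>R a)))"
      using a J_lin by (simp add: linear_scale cconj_def)
    hence "w \<in> cconj_set (polarization_of J)"
      unfolding cconj_set_def polarization_of_def by blast
    ultimately show "w \<in> W \<inter> cconj_set (polarization_of J)" by blast
  qed
  have B: "cconj_set W \<inter> polarization_of J = {(a, - J a) | a. a \<in> S}"
  proof (rule set_eqI, rule iffI)
    fix w assume "w \<in> cconj_set W \<inter> polarization_of J"
    hence w1: "w \<in> cconj_set W" and w2: "w \<in> polarization_of J" by auto
    from w1 obtain w' where "w' \<in> W" "w = cconj w'" unfolding cconj_set_def by blast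
    then obtain u where u: "w = ((1/2) *\<^sub>R u, (1/2) *\<^sub>R JW u)"
      unfolding Wmem cconj_def by auto
    from w2 obtain v where v: "w = ((1/2) *\<^sub>R v, - ((1/2) *\<^sub>R J v))"
      unfolding polarization_of_def by auto
    from u v have uv: "u = v" by auto
    with u v have "(1/2) *\<^sub>R JW u = - ((1/2) *\<^sub>R J u)" by auto
    hence "JW ((1/2) *\<^sub>R u) = - J ((1/2) *\<^sub>R u)"
      using J_lin JW_lin by (simp add: linear_scale)
    hence "(1/2) *\<^sub>R u \<in> S" by (simp add: S_def)
    moreover have "w = ((1/2) *\<^sub>R u, - J ((1/2) *\<^sub>R u))"
      using v uv J_lin by (simp add: linear_scale)
    ultimately show "w \<in> {(a, - J a) | a. a \<in> S}" by blast
  next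
    fix w assume "w \<in> {(a, - J a) | a. a \<in> S}"
    then obtain a where a: "a \<in> S" "w = (a, - J a)" by blast
    have "w = cconj ((1/2) *\<^sub>R (2 *\<^sub>R a), - ((1/2) *\<^sub>R JW (2 *\<^sub>R a)))"
      using a JW_lin by (simp add: linear_scale S_def cconj_def)
    hence "w \<in> cconj_set W" unfolding cconj_set_def using Wmem by blast
    moreover have "w = ((1/2) *\<^sub>R (2 *\<^sub>R a), - ((1/2) *\<^sub>R J (2 *\<^sub>R a)))"
      using a J_lin by (simp add: linear_scale)
    hence "w \<in> polarization_of J"
      unfolding polarization_of_def by blast
    ultimately show "w \<in> cconj_set W \<inter> polarization_of J" by blast
  qed
  have sum: "S \<times> S = {x + y | x y. x \<in> {(a, J a) | a. a \<in> S} \<and> y \<in> {(a, - J a) | a. a \<in> S}}"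
  proof (rule set_eqI, rule iffI)
    fix w assume w: "w \<in> S \<times> S"
    obtain x y where xy: "w = (x, y)" "x \<in> S" "y \<in> S" using w by auto
    define a where "a = (1/2) *\<^sub>R (x - J y)"
    define a' where "a' = (1/2) *\<^sub>R (x + J y)"
    have "J y \<in> S" using xy(3) by (rule S_J)
    hence aS: "a \<in> S" "a' \<in> S" unfolding a_def a'_def
      using xy(2) S_add S_sub S_scale by blast+
    have "a + a' = (1/2) *\<^sub>R ((x - J y) + (x + J y))" unfolding a_def a'_def
      by (simp only: scaleR_right_distrib)
    also have "(x - J y) + (x + J y) = 2 *\<^sub>R x" by (simp add: scaleR_2)
    finally have "a + a' = x" by simp
    moreover have "J a + - J a' = y"
    proof -
      have "J a + - J a' = J (a - a')" using J_lin by (simp add: linear_diff)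
      also have "a - a' = - J y"
      proof -
        have "a - a' = (1/2) *\<^sub>R ((x - J y) - (x + J y))"
          unfolding a_def a'_def by (simp only: scaleR_diff_right)
        also have "(x - J y) - (x + J y) = - (2 *\<^sub>R J y)" by (simp add: scaleR_2)
        finally show ?thesis by simp
      qed
      finally show ?thesis by (simp add: Jneg J_sq)
    qed
    ultimately have "w = (a, J a) + (a', - J a')" using xy by simp
    thus "w \<in> {x + y | x y. x \<in> {(a, J a) | a. a \<in> S} \<and> y \<in> {(a, - J a) | a. a \<in> S}}"
      using aS by blast
  next
    fix w assume "w \<in> {x + y | x y. x \<in> {(a, J a) | a. a \<in> S} \<and> y \<in> {(a, - J a) | a. a \<in> S}}"
    then obtain a a' where aS: "a \<in> S" "a' \<in> S" and w: "w = (a, J a) + (a', - J a')" by blast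
    have "w = (a + a', J (a - a'))" using w J_lin by (simp add: linear_diff)
    thus "w \<in> S \<times> S" using aS S_add S_sub S_J by simp
  qed
  have inter: "{(a, J a) | a. a \<in> S} \<inter> {(a, - J a) | a. a \<in> S} = {0}"
  proof
    show "{(a, J a) | a. a \<in> S} \<inter> {(a, - J a) | a. a \<in> S} \<subseteq> {0}"
    proof
      fix w assume "w \<in> {(a, J a) | a. a \<in> S} \<inter> {(a, - J a) | a. a \<in> S}"
      then obtain a where a: "w = (a, J a)" "J a = - J a" by auto
      hence "J a + J a = 0" by (metis right_minus)
      hence "2 *\<^sub>R J a = 0" by (simp add: scaleR_2)
      hence "J a = 0" by simp
      hence "J (J a) = 0" using J_lin by (simp add: linear_0)
      hence "a = 0" using J_sq by simp
      thus "w \<in> {0}" using a \<open>J a = 0\<close> by (simp add: zero_prod_def)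
    qed
  next
    have "0 \<in> S" unfolding S_def using J_lin JW_lin by (simp add: linear_0)
    moreover have "J 0 = 0" using J_lin by (simp add: linear_0)
    ultimately show "{0} \<subseteq> {(a, J a) | a. a \<in> S} \<inter> {(a, - J a) | a. a \<in> S}"
      by (auto simp: zero_prod_def)
  qed
  show ?thesis
    unfolding b_def[symmetric] b'_def[symmetric] A B is_direct_sum_def
  proof (intro conjI)
    show "is_adjoint d (cext b) (cext b')" by (rule P1)
    show "ker (cext b) = ker (cext b')" by (simp only: kerS kerS')
    show "ker (cext b) = {x + y | x y. x \<in> {(a, J a) | a. a \<in> S} \<and> y \<in> {(a, - J a) | a. a \<in> S}}"
      by (simp only: kerS sum)
    show "{(a, J a) | a. a \<in> S} \<inter> {(a, - J a) | a. a \<in> S} = {0}" by (rule inter)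
  qed
qed

end
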